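(* Let ${\bm{x}}^1,\dots,{\bm{x}}^M\in\mathbb{R}^d$ (one data point per client, i.e. $n=1$) satisfy $\|{\bm{x}}^m\|\le1$ and be linearly separable with maximum margin $\gamma=\max_{\|{\bm{w}}\|=1}\min_m\langle{\bm{w}},{\bm{x}}^m\rangle>0$. Let $\ell(z)=\log(1+e^{-z})$, $F_m({\bm{w}})=\ell(\langle{\bm{w}},{\bm{x}}^m\rangle)$. Run Local GD with stepsize $\eta>0$ and $K\in\mathbb{N}$ local steps: ${\bm{w}}_{r,0}^m={\bm{w}}_r$, ${\bm{w}}_{r,k+1}^m={\bm{w}}_{r,k}^m-\eta\nabla F_m({\bm{w}}_{r,k}^m)$ ($k=0,\dots,K-1$). Define $$\beta_r^m=\frac1K\sum_{k=0}^{K-1}\frac{|\ell'(\langle{\bm{w}}_{r,k}^m,{\bm{x}}^m\rangle)|}{|\ell'(\langle{\bm{w}}_r,{\bm{x}}^m\rangle)|}.$$ Suppose ${\bm{w}}_r={\bm{0}}$. Then $\beta_r^m\le\mathcal O\left(\frac1K+\frac1{\eta\gamma^2K}\log(1+\eta\gamma^2K)\right)$, and if additionally $\eta\ge1$, then $\beta_r^m\le\widetilde{\mathcal O}\left(\frac1K\left(1+\frac1{\gamma^2}\right)\right)$.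
   Context: $\mathcal O$ hides universal constants only; $\widetilde{\mathcal O}$ hides universal constants and logarithmic factors. Linear separability means there is ${\bm{w}}$ with $\langle{\bm{w}},{\bm{x}}^m\rangle>0$ for all $m$ (labels absorbed into data). *)

theory Defs
  imports "HOL-Analysis.Analysis"
begin

text \<open>Vectors in R^d are represented as functions nat => real; only the
coordinates 0..d-1 are used. This lets the dimension d be quantified
inside the statement (so the hidden constants are uniform in d).\<close>

definition ip :: "nat \<Rightarrow> (nat \<Rightarrow> real) \<Rightarrow> (nat \<Rightarrow> real) \<Rightarrow> real" where
  "ip d u v = (\<Sum>i<d. u i * v i)"

definition vnorm :: "nat \<Rightarrow> (nat \<Rightarrow> real) \<Rightarrow> real" where
  "vnorm d v = sqrt (ip d v v)"

definition logloss :: "real \<Rightarrow> real" where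
  "logloss z = ln (1 + exp (- z))"

definition logloss' :: "real \<Rightarrow> real" where
  "logloss' = deriv logloss"

definition margin :: "nat \<Rightarrow> nat \<Rightarrow> (nat \<Rightarrow> nat \<Rightarrow> real) \<Rightarrow> real" where
  "margin d M xs = (SUP w\<in>{w. vnorm d w = 1}. Min ((\<lambda>m. ip d w (xs m)) ` {..<M}))"

text \<open>Local GD on F_m(w) = logloss(<w,x>) whose gradient is logloss'(<w,x>) x:
  w_{k+1} = w_k - eta * grad F_m(w_k), starting from w0.\<close>
primrec local_iter :: "nat \<Rightarrow> real \<Rightarrow> (nat \<Rightarrow> real) \<Rightarrow> (nat \<Rightarrow> real) \<Rightarrow> nat \<Rightarrow> (nat \<Rightarrow> real)" where
  "local_iter d \<eta> x w0 0 = w0"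
| "local_iter d \<eta> x w0 (Suc k) =
     (\<lambda>i. local_iter d \<eta> x w0 k i - \<eta> * logloss' (ip d (local_iter d \<eta> x w0 k) x) * x i)"

definition beta :: "nat \<Rightarrow> real \<Rightarrow> nat \<Rightarrow> (nat \<Rightarrow> real) \<Rightarrow> (nat \<Rightarrow> real) \<Rightarrow> real" where
  "beta d \<eta> K x w0 = (1 / real K) * (\<Sum>k<K.
      \<bar>logloss' (ip d (local_iter d \<eta> x w0 k) x)\<bar> / \<bar>logloss' (ip d w0 x)\<bar>)"

end

theory Submission imports Defs begin

lemma ll'_eq: "logloss' z = - 1 / (1 + exp z)"
proof -
  have "(logloss has_real_derivative (- exp (-z) / (1 + exp (-z)))) (at z)"
    unfolding logloss_def[abs_def]
    by (auto intro!: derivative_eq_intros simp: add_pos_pos)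
  then have "logloss' z = - exp (-z) / (1 + exp (-z))"
    unfolding logloss'_def by (rule DERIV_imp_deriv)
  also have "\<dots> = - 1 / (1 + exp z)"
    by (simp add: exp_minus field_simps add_pos_pos)
  finally show ?thesis .
qed

lemma z_rec:
  "ip d (local_iter d \<eta> x w0 (Suc k)) x
     = ip d (local_iter d \<eta> x w0 k) x + \<eta> * ip d x x / (1 + exp (ip d (local_iter d \<eta> x w0 k) x))"
  by (simp add: ip_def ll'_eq algebra_simps sum.distrib sum_distrib_left sum_divide_distrib)

lemma exp_grow:
  fixes z :: "nat \<Rightarrow> real"
  assumes z0: "z 0 = 0" and zs: "\<And>k. z (Suc k) = z k + a / (1 + exp (z k))"
    and b: "0 < b" "b \<le> a"
  shows "z k \<ge> 0 \<and> exp (z k) \<ge> 1 + b * k / 2"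
proof (induction k)
  case 0 then show ?case using z0 by simp
next
  case (Suc k)
  let ?e = "exp (z k)"
  have e1: "?e \<ge> 1" using Suc by simp
  have a0: "a > 0" using b by simp
  have q: "a / (1 + ?e) \<ge> 0" using a0 by (simp add: add_pos_pos)
  have "exp (z (Suc k)) = ?e * exp (a / (1 + ?e))" by (simp add: zs exp_add)
  also have "\<dots> \<ge> ?e * (1 + a / (1 + ?e))"
    using exp_ge_add_one_self[of "a / (1 + ?e)"] by (simp add: add.commute)
  finally have A: "exp (z (Suc k)) \<ge> ?e + a * ?e / (1 + ?e)" by (simp add: field_simps)
  have "?e / (1 + ?e) \<ge> 1 / 2"
    using e1 by (simp add: divide_simps add_pos_pos)
  then have "a * (?e / (1 + ?e)) \<ge> a * (1 / 2)"
    using a0 by (intro mult_left_mono) auto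
  then have "a * ?e / (1 + ?e) \<ge> a / 2" by simp
  then have "exp (z (Suc k)) \<ge> 1 + b * k / 2 + b / 2" using A Suc b by linarith
  then show ?case using Suc q zs[of k] by (simp add: field_simps)
qed

lemma sum_bound:
  fixes b :: real assumes b: "b > 0"
  shows "(\<Sum>k<Suc n. 2 / (4 + b * k)) \<le> 1/2 + 4 / b * ln (1 + b * n)"
proof (induction n)
  case 0 then show ?case by simp
next
  case (Suc n)
  have p1: "1 + b * n > 0" using b by (simp add: add_pos_nonneg)
  have p2: "1 + b * Suc n > 0" using b by (simp add: add_pos_nonneg)
  have "ln ((1 + b * n) / (1 + b * Suc n)) \<le> (1 + b * n) / (1 + b * Suc n) - 1"
    using p1 p2 by (intro ln_le_minus_one) simp
  then have L: "ln (1 + b * Suc n) - ln (1 + b * n) \<ge> b / (1 + b * Suc n)"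
    using p1 p2 by (simp add: ln_div field_simps)
  have "2 / (4 + b * Suc n) \<le> 4 / (1 + b * Suc n)"
    using b p2 by (simp add: field_simps)
  also have "\<dots> = 4 / b * (b / (1 + b * Suc n))" using b by simp
  also have "\<dots> \<le> 4 / b * (ln (1 + b * Suc n) - ln (1 + b * n))"
    using L b by (intro mult_left_mono) auto
  finally show ?case using Suc.IH by (simp add: algebra_simps)
qed

lemma ip_cs: "ip d w x \<le> vnorm d w * vnorm d x"
proof -
  have "(ip d w x)\<^sup>2 \<le> ip d w w * ip d x x"
    unfolding ip_def using Cauchy_Schwarz_ineq_sum[of w x "{..<d}"] by (simp add: power2_eq_square)
  then have "sqrt ((ip d w x)\<^sup>2) \<le> sqrt (ip d w w * ip d x x)" by (rule real_sqrt_le_mono)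
  then have "\<bar>ip d w x\<bar> \<le> sqrt (ip d w w * ip d x x)" by (simp only: real_sqrt_abs)
  then have "\<bar>ip d w x\<bar> \<le> vnorm d w * vnorm d x" by (simp add: vnorm_def real_sqrt_mult)
  then show ?thesis by simp
qed

lemma margin_le:
  assumes M: "M \<ge> 1" "m < M" and ex: "\<exists>w. \<forall>j<M. ip d w (xs j) > 0"
  shows "margin d M xs \<le> vnorm d (xs m)"
proof -
  have d: "d > 0"
  proof (rule ccontr)
    assume "\<not> d > 0"
    then have "d = 0" by simp
    then show False using ex M by (auto simp: ip_def)
  qed
  define w0 :: "nat \<Rightarrow> real" where "w0 = (\<lambda>i. if i = 0 then 1 else 0)"
  have "ip d w0 w0 = 1" using d by (simp add: ip_def w0_def if_distrib sum.If_cases)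
  then have ne: "{w. vnorm d w = 1} \<noteq> {}" by (auto simp: vnorm_def)
  show ?thesis unfolding margin_def
  proof (rule cSUP_least[OF ne])
    fix w assume "w \<in> {w. vnorm d w = 1}"
    then have w1: "vnorm d w = 1" by simp
    have "Min ((\<lambda>m. ip d w (xs m)) ` {..<M}) \<le> ip d w (xs m)"
      using M by (intro Min_le) auto
    also have "\<dots> \<le> vnorm d (xs m)" using ip_cs[of d w "xs m"] w1 by simp
    finally show "Min ((\<lambda>m. ip d w (xs m)) ` {..<M}) \<le> vnorm d (xs m)" .
  qed
qed

lemma beta_bound:
  assumes b: "0 < b" "b \<le> \<eta> * ip d x x" and K: "K \<ge> 1"
  shows "beta d \<eta> K x (\<lambda>_. 0) \<le> 1 / K + 8 * ln (1 + b * K) / (b * K)"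
proof -
  define z where "z k = ip d (local_iter d \<eta> x (\<lambda>_. 0) k) x" for k
  have z0: "z 0 = 0" by (simp add: z_def ip_def)
  have zs: "\<And>k. z (Suc k) = z k + (\<eta> * ip d x x) / (1 + exp (z k))"
    unfolding z_def by (rule z_rec)
  have g: "exp (z k) \<ge> 1 + b * k / 2" for k
    using exp_grow[of z "\<eta> * ip d x x" b, OF z0 zs b] by blast
  have l0: "ip d (\<lambda>_. 0) x = 0" by (simp add: ip_def)
  have trm: "\<bar>logloss' (ip d (local_iter d \<eta> x (\<lambda>_. 0) k) x)\<bar> / \<bar>logloss' (ip d (\<lambda>_. 0) x)\<bar>
      \<le> 2 * (2 / (4 + b * k))" for k
  proof -
    have p: "1 + exp (z k) > 0" by (simp add: add_pos_pos)
    have "\<bar>logloss' (ip d (local_iter d \<eta> x (\<lambda>_. 0) k) x)\<bar> / \<bar>logloss' (ip d (\<lambda>_. 0) x)\<bar>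
        = 2 / (1 + exp (z k))"
      using p by (simp add: l0 ll'_eq z_def[symmetric] abs_div)
    also have "\<dots> \<le> 2 / (2 + b * k / 2)"
      using g[of k] b p by (intro divide_left_mono) (auto intro!: mult_pos_pos add_pos_nonneg)
    also have "\<dots> = 2 * (2 / (4 + b * k))" using b by (simp add: field_simps)
    finally show ?thesis .
  qed
  obtain n where n: "K = Suc n" using K by (cases K) auto
  have S: "(\<Sum>k<K. \<bar>logloss' (ip d (local_iter d \<eta> x (\<lambda>_. 0) k) x)\<bar> / \<bar>logloss' (ip d (\<lambda>_. 0) x)\<bar>)
       \<le> (\<Sum>k<K. 2 * (2 / (4 + b * k)))"
    by (intro sum_mono trm)
  also have "\<dots> = 2 * (\<Sum>k<Suc n. 2 / (4 + b * k))" by (simp add: sum_distrib_left n)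
  also have "\<dots> \<le> 2 * (1/2 + 4 / b * ln (1 + b * n))"
    using sum_bound[OF b(1), of n] by simp
  also have "\<dots> \<le> 2 * (1/2 + 4 / b * ln (1 + b * K))"
  proof -
    have "ln (1 + b * n) \<le> ln (1 + b * K)"
      using b by (subst ln_le_cancel_iff) (auto simp: n intro: add_pos_nonneg)
    then show ?thesis using b by (simp add: divide_right_mono)
  qed
  finally have S2: "(\<Sum>k<K. \<bar>logloss' (ip d (local_iter d \<eta> x (\<lambda>_. 0) k) x)\<bar> / \<bar>logloss' (ip d (\<lambda>_. 0) x)\<bar>)
       \<le> 1 + 8 / b * ln (1 + b * K)" by simp
  have "beta d \<eta> K x (\<lambda>_. 0) \<le> (1 / real K) * (1 + 8 / b * ln (1 + b * K))"
    unfolding beta_def using K by (intro mult_left_mono S2) auto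
  also have "\<dots> = 1 / K + 8 * ln (1 + b * K) / (b * K)" using b K by (simp add: field_simps)
  finally show ?thesis .
qed

lemma aux: fixes q L L' :: real assumes "q \<ge> 0" "L \<ge> 0" "L' \<ge> 0"
  shows "1 + 8 * q * L \<le> 8 * (1 + q) * (1 + L + L')"
proof -
  have "0 \<le> q * L'" using assms by simp
  then show ?thesis using assms by (simp add: algebra_simps)
qed

theorem lemmaB7:
  shows "(\<exists>C>0. \<forall>d M (xs :: nat \<Rightarrow> nat \<Rightarrow> real) \<eta> (K::nat) m.
            M \<ge> 1 \<longrightarrow> (\<forall>j<M. vnorm d (xs j) \<le> 1) \<longrightarrow>
            (\<exists>w. \<forall>j<M. ip d w (xs j) > 0) \<longrightarrow> margin d M xs > 0 \<longrightarrow>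
            \<eta> > 0 \<longrightarrow> K \<ge> 1 \<longrightarrow> m < M \<longrightarrow>
            beta d \<eta> K (xs m) (\<lambda>_. 0)
              \<le> C * (1 / real K + ln (1 + \<eta> * (margin d M xs)\<^sup>2 * real K)
                                   / (\<eta> * (margin d M xs)\<^sup>2 * real K)))
       \<and> (\<exists>C (p::nat). \<forall>d M (xs :: nat \<Rightarrow> nat \<Rightarrow> real) \<eta> (K::nat) m.
            M \<ge> 1 \<longrightarrow> (\<forall>j<M. vnorm d (xs j) \<le> 1) \<longrightarrow>
            (\<exists>w. \<forall>j<M. ip d w (xs j) > 0) \<longrightarrow> margin d M xs > 0 \<longrightarrow>
            \<eta> \<ge> 1 \<longrightarrow> K \<ge> 1 \<longrightarrow> m < M \<longrightarrow>
            beta d \<eta> K (xs m) (\<lambda>_. 0)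
              \<le> C * (1 / real K) * (1 + 1 / (margin d M xs)\<^sup>2)
                  * (1 + ln (1 + real K) + ln (1 + 1 / margin d M xs)) ^ p)"
proof (intro conjI)
  show "\<exists>C>0. \<forall>d M (xs :: nat \<Rightarrow> nat \<Rightarrow> real) \<eta> (K::nat) m.
            M \<ge> 1 \<longrightarrow> (\<forall>j<M. vnorm d (xs j) \<le> 1) \<longrightarrow>
            (\<exists>w. \<forall>j<M. ip d w (xs j) > 0) \<longrightarrow> margin d M xs > 0 \<longrightarrow>
            \<eta> > 0 \<longrightarrow> K \<ge> 1 \<longrightarrow> m < M \<longrightarrow>
            beta d \<eta> K (xs m) (\<lambda>_. 0)
              \<le> C * (1 / real K + ln (1 + \<eta> * (margin d M xs)\<^sup>2 * real K)
                                   / (\<eta> * (margin d M xs)\<^sup>2 * real K))"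
  proof (intro exI[of _ 8] conjI allI impI)
    fix d M xs \<eta> K m
    assume M: "(M::nat) \<ge> 1" and nb: "\<forall>j<M. vnorm d (xs j) \<le> 1"
      and ex: "\<exists>w. \<forall>j<M. ip d w (xs j) > 0" and gp: "margin d M xs > 0"
      and e: "(\<eta>::real) > 0" and K: "(K::nat) \<ge> 1" and m: "m < M"
    define g where "g = margin d M xs"
    have gs: "g \<le> sqrt (ip d (xs m) (xs m))"
      using margin_le[OF M m ex] by (simp add: g_def vnorm_def)
    have g0: "g > 0" using gp g_def by simp
    have s0: "ip d (xs m) (xs m) \<ge> 0" unfolding ip_def by (intro sum_nonneg) simp
    have "g\<^sup>2 \<le> (sqrt (ip d (xs m) (xs m)))\<^sup>2"
      using gs g0 by (intro power_mono) auto
    then have "g\<^sup>2 \<le> ip d (xs m) (xs m)" using s0 by simp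
    then have bl: "\<eta> * g\<^sup>2 \<le> \<eta> * ip d (xs m) (xs m)" using e by simp
    have bp: "\<eta> * g\<^sup>2 > 0" using e g0 by simp
    have "beta d \<eta> K (xs m) (\<lambda>_. 0) \<le> 1 / K + 8 * ln (1 + \<eta> * g\<^sup>2 * K) / (\<eta> * g\<^sup>2 * K)"
      using beta_bound[OF bp bl K] by simp
    also have "\<dots> \<le> 8 * (1 / K + ln (1 + \<eta> * g\<^sup>2 * K) / (\<eta> * g\<^sup>2 * K))"
    proof -
      have "ln (1 + \<eta> * g\<^sup>2 * K) \<ge> 0" using bp by simp
      then have "ln (1 + \<eta> * g\<^sup>2 * K) / (\<eta> * g\<^sup>2 * K) \<ge> 0" using bp by simp
      then show ?thesis using K by (simp add: field_simps)
    qed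
    finally show "beta d \<eta> K (xs m) (\<lambda>_. 0)
              \<le> 8 * (1 / real K + ln (1 + \<eta> * (margin d M xs)\<^sup>2 * real K)
                                   / (\<eta> * (margin d M xs)\<^sup>2 * real K))" by (simp add: g_def)
  qed simp
next
  show "\<exists>C (p::nat). \<forall>d M (xs :: nat \<Rightarrow> nat \<Rightarrow> real) \<eta> (K::nat) m.
            M \<ge> 1 \<longrightarrow> (\<forall>j<M. vnorm d (xs j) \<le> 1) \<longrightarrow>
            (\<exists>w. \<forall>j<M. ip d w (xs j) > 0) \<longrightarrow> margin d M xs > 0 \<longrightarrow>
            \<eta> \<ge> 1 \<longrightarrow> K \<ge> 1 \<longrightarrow> m < M \<longrightarrow>
            beta d \<eta> K (xs m) (\<lambda>_. 0)
              \<le> C * (1 / real K) * (1 + 1 / (margin d M xs)\<^sup>2)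
                  * (1 + ln (1 + real K) + ln (1 + 1 / margin d M xs)) ^ p"
  proof (intro exI[of _ "8::real"] exI[of _ "1::nat"] allI impI)
    fix d M xs \<eta> K m
    assume M: "(M::nat) \<ge> 1" and nb: "\<forall>j<M. vnorm d (xs j) \<le> 1"
      and ex: "\<exists>w. \<forall>j<M. ip d w (xs j) > 0" and gp: "margin d M xs > 0"
      and e: "(\<eta>::real) \<ge> 1" and K: "(K::nat) \<ge> 1" and m: "m < M"
    define g where "g = margin d M xs"
    have gs: "g \<le> sqrt (ip d (xs m) (xs m))"
      using margin_le[OF M m ex] by (simp add: g_def vnorm_def)
    have g1: "g \<le> 1" using margin_le[OF M m ex] nb m unfolding g_def by force
    have g0: "g > 0" using gp g_def by simp
    have s0: "ip d (xs m) (xs m) \<ge> 0" unfolding ip_def by (intro sum_nonneg) simp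
    have "g\<^sup>2 \<le> (sqrt (ip d (xs m) (xs m)))\<^sup>2"
      using gs g0 by (intro power_mono) auto
    then have "g\<^sup>2 \<le> ip d (xs m) (xs m)" using s0 by simp
    moreover have "g\<^sup>2 \<le> \<eta> * g\<^sup>2" using e mult_right_mono[of 1 \<eta> "g\<^sup>2"] by simp
    moreover have "ip d (xs m) (xs m) \<le> \<eta> * ip d (xs m) (xs m)"
      using e s0 mult_right_mono[of 1 \<eta> "ip d (xs m) (xs m)"] by simp
    ultimately have bl: "g\<^sup>2 \<le> \<eta> * ip d (xs m) (xs m)" by linarith
    have bp: "g\<^sup>2 > 0" using g0 by simp
    define L where "L = ln (1 + real K)"
    define L' where "L' = ln (1 + 1 / g)"
    have L0: "L \<ge> 0" "L' \<ge> 0" using g0 by (auto simp: L_def L'_def)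
    have "ln (1 + g\<^sup>2 * K) \<le> L"
      unfolding L_def using g1 g0 bp by (subst ln_le_cancel_iff)
        (auto intro!: add_pos_nonneg mult_left_le_one_le simp: power_le_one)
    have "beta d \<eta> K (xs m) (\<lambda>_. 0) \<le> 1 / K + 8 * ln (1 + g\<^sup>2 * K) / (g\<^sup>2 * K)"
      using beta_bound[OF bp bl K] by simp
    also have "\<dots> \<le> 1 / K + 8 * L / (g\<^sup>2 * K)"
      using \<open>ln (1 + g\<^sup>2 * K) \<le> L\<close> bp K by (simp add: divide_right_mono)
    also have "\<dots> = (1 / K) * (1 + 8 * (1 / g\<^sup>2) * L)" using bp K by (simp add: field_simps)
    also have "\<dots> \<le> (1 / K) * (8 * (1 + 1 / g\<^sup>2) * (1 + L + L'))"
    proof (rule mult_left_mono)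
      show "1 + 8 * (1 / g\<^sup>2) * L \<le> 8 * (1 + 1 / g\<^sup>2) * (1 + L + L')"
        using aux[of "1 / g\<^sup>2" L L'] L0 by simp
    qed simp
    finally show "beta d \<eta> K (xs m) (\<lambda>_. 0)
              \<le> 8 * (1 / real K) * (1 + 1 / (margin d M xs)\<^sup>2)
                  * (1 + ln (1 + real K) + ln (1 + 1 / margin d M xs)) ^ 1"
      by (simp add: g_def L_def L'_def mult.assoc)
  qed
qed

end
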